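(* Let $(X,\mu)$ be a measure space with $\mu$ a non-negative finite Borel measure, let $\phi\in L^\infty(X,\mu)$, and let $M_\phi:L^2(X,\mu)\to L^2(X,\mu)$, $M_\phi f=\phi f$. (A) The following are equivalent: (i) $M_\phi$ is recurrent; (ii) $M_\phi$ is rigid; (iii) there is a strictly increasing sequence of positive integers $(k_n)$ such that $\phi(x)^{k_n}\to1$ as $n\to\infty$ for $\mu$-almost every $x\in X$. (B) The following are equivalent: (i) $M_\phi$ is uniformly rigid; (ii) there is a strictly increasing sequence of positive integers $(k_n)$ with $\|\phi^{k_n}-1\|_{L^\infty(X)}\to0$. In particular, if $M_\phi$ is recurrent then $|\phi|=1$ $\mu$-almost everywhere.
   Context: An operator $T$ on a Banach space $Y$ is recurrent if for every non-empty open $U\subset Y$ there is a positive integer $k$ with $U\cap T^{-k}(U)\neq\emptyset$; rigid if there is an increasing sequence of positive integers $(k_n)$ with $T^{k_n}y\to y$ for all $y\in Y$; uniformly rigid if there is an increasing sequence of positive integers $(k_n)$ with $\|T^{k_n}-I\|\to0$. *)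

theory Defs
  imports "HOL-Analysis.Analysis"
begin

text \<open>L^2(X,mu) of complex-valued functions, as a seminormed space of representatives
  (open sets of the quotient Banach space correspond exactly to open sets of this
  pseudometric topology).\<close>

definition L2 :: "'a measure \<Rightarrow> ('a \<Rightarrow> complex) set" where
  "L2 M = {f. f \<in> borel_measurable M \<and> integrable M (\<lambda>x. (cmod (f x))^2)}"

definition L2norm :: "'a measure \<Rightarrow> ('a \<Rightarrow> complex) \<Rightarrow> real" where
  "L2norm M f = sqrt (LINT x|M. (cmod (f x))^2)"

definition Linf :: "'a measure \<Rightarrow> ('a \<Rightarrow> complex) set" where
  "Linf M = {f. f \<in> borel_measurable M \<and> (\<exists>C. AE x in M. cmod (f x) \<le> C)}"

definition Linf_norm :: "'a measure \<Rightarrow> ('a \<Rightarrow> complex) \<Rightarrow> real" where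
  "Linf_norm M g = Inf {C. 0 \<le> C \<and> (AE x in M. cmod (g x) \<le> C)}"

definition Mmul :: "('a \<Rightarrow> complex) \<Rightarrow> ('a \<Rightarrow> complex) \<Rightarrow> ('a \<Rightarrow> complex)" where
  "Mmul \<phi> f = (\<lambda>x. \<phi> x * f x)"

definition L2open :: "'a measure \<Rightarrow> ('a \<Rightarrow> complex) set \<Rightarrow> bool" where
  "L2open M U \<longleftrightarrow> U \<subseteq> L2 M \<and>
     (\<forall>f\<in>U. \<exists>e>0. \<forall>g\<in>L2 M. L2norm M (\<lambda>x. g x - f x) < e \<longrightarrow> g \<in> U)"

definition L2opnorm :: "'a measure \<Rightarrow> (('a \<Rightarrow> complex) \<Rightarrow> ('a \<Rightarrow> complex)) \<Rightarrow> real" where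
  "L2opnorm M T = Sup {L2norm M (T f) | f. f \<in> L2 M \<and> L2norm M f \<le> 1}"

definition recurrent_L2 :: "'a measure \<Rightarrow> (('a \<Rightarrow> complex) \<Rightarrow> ('a \<Rightarrow> complex)) \<Rightarrow> bool" where
  "recurrent_L2 M T \<longleftrightarrow> (\<forall>U. L2open M U \<and> U \<noteq> {} \<longrightarrow>
      (\<exists>k::nat. 0 < k \<and> (\<exists>g\<in>U. (T ^^ k) g \<in> U)))"

definition rigid_L2 :: "'a measure \<Rightarrow> (('a \<Rightarrow> complex) \<Rightarrow> ('a \<Rightarrow> complex)) \<Rightarrow> bool" where
  "rigid_L2 M T \<longleftrightarrow> (\<exists>ks::nat \<Rightarrow> nat. strict_mono ks \<and> (\<forall>n. 0 < ks n) \<and>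
      (\<forall>f\<in>L2 M. (\<lambda>n. L2norm M (\<lambda>x. (T ^^ ks n) f x - f x)) \<longlonglongrightarrow> 0))"

definition unif_rigid_L2 :: "'a measure \<Rightarrow> (('a \<Rightarrow> complex) \<Rightarrow> ('a \<Rightarrow> complex)) \<Rightarrow> bool" where
  "unif_rigid_L2 M T \<longleftrightarrow> (\<exists>ks::nat \<Rightarrow> nat. strict_mono ks \<and> (\<forall>n. 0 < ks n) \<and>
      (\<lambda>n. L2opnorm M (\<lambda>f x. (T ^^ ks n) f x - f x)) \<longlonglongrightarrow> 0)"

end

theory Submission
  imports Defs
begin


lemma funpow_Mmul: "(Mmul \<phi> ^^ k) f = (\<lambda>x. \<phi> x ^ k * f x)"
  by (induction k) (auto simp: Mmul_def)

lemma L2_I: "f \<in> borel_measurable M \<Longrightarrow> integrable M (\<lambda>x. (cmod (f x))^2) \<Longrightarrow> f \<in> L2 M"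
  by (simp add: L2_def)

lemma L2_meas: "f \<in> L2 M \<Longrightarrow> f \<in> borel_measurable M"
  by (simp add: L2_def)

lemma L2_int: "f \<in> L2 M \<Longrightarrow> integrable M (\<lambda>x. (cmod (f x))^2)"
  by (simp add: L2_def)

lemma L2_const: "finite_measure M \<Longrightarrow> (\<lambda>x. c) \<in> L2 M"
  by (auto simp: L2_def intro: finite_measure.integrable_const)

lemma L2_mult_bounded:
  assumes "f \<in> L2 M" "\<psi> \<in> borel_measurable M" "AE x in M. cmod (\<psi> x) \<le> D"
  shows "(\<lambda>x. \<psi> x * f x) \<in> L2 M"
proof (rule L2_I)
  have [measurable]: "f \<in> borel_measurable M" using assms(1) by (rule L2_meas)
  note [measurable] = assms(2)
  show "(\<lambda>x. \<psi> x * f x) \<in> borel_measurable M" by measurable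
  show "integrable M (\<lambda>x. (cmod (\<psi> x * f x))\<^sup>2)"
  proof (rule Bochner_Integration.integrable_bound[where f="\<lambda>x. D^2 * (cmod (f x))^2"])
    show "integrable M (\<lambda>x. D^2 * (cmod (f x))^2)" using L2_int[OF assms(1)] by simp
    show "(\<lambda>x. (cmod (\<psi> x * f x))\<^sup>2) \<in> borel_measurable M" by measurable
    show "AE x in M. norm ((cmod (\<psi> x * f x))\<^sup>2) \<le> norm (D^2 * (cmod (f x))^2)"
      using assms(3)
    proof eventually_elim
      case (elim x)
      have "0 \<le> D" using elim by (rule order_trans[OF norm_ge_zero])
      have "(cmod (\<psi> x))^2 \<le> D^2" by (rule power_mono[OF elim norm_ge_zero])
      then have "(cmod (\<psi> x))^2 * (cmod (f x))^2 \<le> D^2 * (cmod (f x))^2"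
        by (simp add: mult_right_mono)
      then show ?case by (simp add: norm_mult power_mult_distrib)
    qed
  qed
qed

lemma L2_diff:
  assumes "f \<in> L2 M" "g \<in> L2 M"
  shows "(\<lambda>x. f x - g x) \<in> L2 M" "(\<lambda>x. f x + g x) \<in> L2 M"
proof -
  have [measurable]: "f \<in> borel_measurable M" "g \<in> borel_measurable M" using assms by (auto intro: L2_meas)
  have i: "integrable M (\<lambda>x. 2*(cmod (f x))^2 + 2*(cmod (g x))^2)"
    using L2_int[OF assms(1)] L2_int[OF assms(2)] by simp
  have pw: "(cmod (a + b))^2 \<le> 2*(cmod a)^2 + 2*(cmod b)^2" for a b :: complex
  proof -
    have "cmod (a+b) \<le> cmod a + cmod b" by (rule norm_triangle_ineq)
    then have "(cmod (a+b))^2 \<le> (cmod a + cmod b)^2" by (rule power_mono[OF _ norm_ge_zero])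
    also have "\<dots> \<le> 2*(cmod a)^2 + 2*(cmod b)^2"
    proof -
      have "0 \<le> (cmod a - cmod b)^2" by simp
      then show ?thesis by (simp add: power2_diff power2_sum)
    qed
    finally show ?thesis .
  qed
  have pw2: "(cmod (a - b))^2 \<le> 2*(cmod a)^2 + 2*(cmod b)^2" for a b :: complex
    using pw[of a "-b"] by simp
  show "(\<lambda>x. f x - g x) \<in> L2 M"
  proof (rule L2_I)
    show "(\<lambda>x. f x - g x) \<in> borel_measurable M" by measurable
    show "integrable M (\<lambda>x. (cmod (f x - g x))\<^sup>2)"
      by (rule Bochner_Integration.integrable_bound[OF i]) (auto intro!: AE_I2 pw2)
  qed
  show "(\<lambda>x. f x + g x) \<in> L2 M"
  proof (rule L2_I)
    show "(\<lambda>x. f x + g x) \<in> borel_measurable M" by measurable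
    show "integrable M (\<lambda>x. (cmod (f x + g x))\<^sup>2)"
      by (rule Bochner_Integration.integrable_bound[OF i]) (auto intro!: AE_I2 pw)
  qed
qed

lemma L2norm_nonneg: "0 \<le> L2norm M f"
  by (simp add: L2norm_def)

lemma L2norm_sq: "(L2norm M f)^2 = (LINT x|M. (cmod (f x))^2)"
  by (simp add: L2norm_def)


lemma L2_prod_int:
  assumes "f \<in> L2 M" "g \<in> L2 M"
  shows "integrable M (\<lambda>x. cmod (f x) * cmod (g x))"
proof -
  have [measurable]: "f \<in> borel_measurable M" "g \<in> borel_measurable M" using assms by (auto intro: L2_meas)
  have i: "integrable M (\<lambda>x. (cmod (f x))^2 + (cmod (g x))^2)"
    using L2_int[OF assms(1)] L2_int[OF assms(2)] by simp
  have pw: "cmod a * cmod b \<le> (cmod a)^2 + (cmod b)^2" for a b :: complex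
  proof -
    have "0 \<le> (cmod a - cmod b)^2" by simp
    then have "0 \<le> (cmod a)^2 + (cmod b)^2 - 2*(cmod a * cmod b)" by (simp add: power2_diff)
    moreover have "0 \<le> cmod a * cmod b" by simp
    ultimately show ?thesis by linarith
  qed
  show ?thesis
    by (rule Bochner_Integration.integrable_bound[OF i]) (auto intro!: AE_I2 simp: pw abs_mult)
qed

lemma L2_CS:
  assumes "f \<in> L2 M" "g \<in> L2 M"
  shows "(LINT x|M. cmod (f x) * cmod (g x)) \<le> L2norm M f * L2norm M g"
proof -
  have [measurable]: "f \<in> borel_measurable M" "g \<in> borel_measurable M" using assms by (auto intro: L2_meas)
  define I where "I = (LINT x|M. cmod (f x) * cmod (g x))"
  define A where "A = (LINT x|M. (cmod (f x))^2)"
  define B where "B = (LINT x|M. (cmod (g x))^2)"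
  have A0: "0 \<le> A" "0 \<le> B" unfolding A_def B_def by auto
  have I0: "0 \<le> I" unfolding I_def by auto
  have eI: "(\<integral>\<^sup>+x. ennreal (cmod (f x)) * ennreal (cmod (g x)) \<partial>M) = ennreal I"
    unfolding I_def
    by (subst ennreal_mult[symmetric], simp, simp)
       (rule nn_integral_eq_integral[OF L2_prod_int[OF assms]], simp)
  have eA: "(\<integral>\<^sup>+x. (ennreal (cmod (f x)))^2 \<partial>M) = ennreal A"
    unfolding A_def
    by (simp add: ennreal_power)
       (rule nn_integral_eq_integral[OF L2_int[OF assms(1)]], simp)
  have eB: "(\<integral>\<^sup>+x. (ennreal (cmod (g x)))^2 \<partial>M) = ennreal B"
    unfolding B_def
    by (simp add: ennreal_power)
       (rule nn_integral_eq_integral[OF L2_int[OF assms(2)]], simp)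
  have "(ennreal I)^2 \<le> ennreal A * ennreal B"
    using Cauchy_Schwarz_nn_integral[of "\<lambda>x. ennreal (cmod (f x))" M "\<lambda>x. ennreal (cmod (g x))"]
    by (simp add: eI eA eB)
  then have "ennreal (I^2) \<le> ennreal (A * B)"
    by (simp only: ennreal_power[OF I0] ennreal_mult[OF A0])
  then have "I^2 \<le> A * B" using A0 by (simp add: ennreal_le_iff)
  then have "\<bar>I\<bar> \<le> sqrt (A*B)" by (simp add: real_le_rsqrt)
  then show ?thesis unfolding L2norm_def I_def[symmetric] A_def[symmetric] B_def[symmetric]
    by (simp add: real_sqrt_mult)
qed

lemma L2norm_triangle:
  assumes "f \<in> L2 M" "g \<in> L2 M"
  shows "L2norm M (\<lambda>x. f x + g x) \<le> L2norm M f + L2norm M g"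
proof -
  have [measurable]: "f \<in> borel_measurable M" "g \<in> borel_measurable M" using assms by (auto intro: L2_meas)
  have i: "integrable M (\<lambda>x. (cmod (f x))^2 + 2 * (cmod (f x) * cmod (g x)) + (cmod (g x))^2)"
    using L2_int[OF assms(1)] L2_int[OF assms(2)] L2_prod_int[OF assms] by simp
  have "(LINT x|M. (cmod (f x + g x))^2) \<le> (LINT x|M. (cmod (f x))^2 + 2 * (cmod (f x) * cmod (g x)) + (cmod (g x))^2)"
  proof (rule integral_mono[OF L2_int[OF L2_diff(2)[OF assms]] i])
    fix x
    have "cmod (f x + g x) \<le> cmod (f x) + cmod (g x)" by (rule norm_triangle_ineq)
    then have "(cmod (f x + g x))^2 \<le> (cmod (f x) + cmod (g x))^2" by (rule power_mono[OF _ norm_ge_zero])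
    then show "(cmod (f x + g x))^2 \<le> (cmod (f x))^2 + 2 * (cmod (f x) * cmod (g x)) + (cmod (g x))^2"
      by (simp add: power2_sum)
  qed
  also have "\<dots> = (L2norm M f)^2 + 2 * (LINT x|M. cmod (f x) * cmod (g x)) + (L2norm M g)^2"
    using L2_int[OF assms(1)] L2_int[OF assms(2)] L2_prod_int[OF assms] by (simp add: L2norm_sq)
  also have "\<dots> \<le> (L2norm M f)^2 + 2 * (L2norm M f * L2norm M g) + (L2norm M g)^2"
    using L2_CS[OF assms] by simp
  also have "\<dots> = (L2norm M f + L2norm M g)^2" by (simp add: power2_sum)
  finally have "(L2norm M (\<lambda>x. f x + g x))^2 \<le> (L2norm M f + L2norm M g)^2"
    by (simp add: L2norm_sq)
  then show ?thesis
    by (rule power2_le_imp_le) (simp add: L2norm_nonneg add_nonneg_nonneg)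
qed

lemma L2_ball_open:
  assumes "c \<in> L2 M"
  shows "L2open M {g \<in> L2 M. L2norm M (\<lambda>x. g x - c x) < r}"
  unfolding L2open_def
proof (intro conjI ballI)
  fix f assume f: "f \<in> {g \<in> L2 M. L2norm M (\<lambda>x. g x - c x) < r}"
  show "\<exists>e>0. \<forall>g\<in>L2 M. L2norm M (\<lambda>x. g x - f x) < e \<longrightarrow> g \<in> {g \<in> L2 M. L2norm M (\<lambda>x. g x - c x) < r}"
  proof (intro exI[of _ "r - L2norm M (\<lambda>x. f x - c x)"] conjI ballI impI)
    show "0 < r - L2norm M (\<lambda>x. f x - c x)" using f by simp
    fix g assume g: "g \<in> L2 M" and lt: "L2norm M (\<lambda>x. g x - f x) < r - L2norm M (\<lambda>x. f x - c x)"
    have "L2norm M (\<lambda>x. g x - c x) = L2norm M (\<lambda>x. (g x - f x) + (f x - c x))" by simp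
    also have "\<dots> \<le> L2norm M (\<lambda>x. g x - f x) + L2norm M (\<lambda>x. f x - c x)"
      by (rule L2norm_triangle) (use f g assms in \<open>auto intro: L2_diff\<close>)
    finally show "g \<in> {g \<in> L2 M. L2norm M (\<lambda>x. g x - c x) < r}" using g lt by simp
  qed
qed auto


definition eta :: "'a measure \<Rightarrow> ('a \<Rightarrow> complex) \<Rightarrow> nat \<Rightarrow> real" where
  "eta M \<phi> k = (LINT x|M. min 1 ((cmod (\<phi> x ^ k - 1))^2))"

lemma pw_key:
  fixes z g :: complex
  shows "min 1 ((cmod (z - 1))^2) \<le> 8*(cmod (z*g - 1))^2 + 8*(cmod (g - 1))^2"
proof (cases "cmod g \<ge> 1/2")
  case True
  have "cmod (z-1) * cmod g = cmod ((z*g - 1) - (g - 1))"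
    by (simp add: norm_mult[symmetric] algebra_simps)
  also have "\<dots> \<le> cmod (z*g - 1) + cmod (g - 1)" by (rule norm_triangle_ineq4)
  finally have "cmod (z-1) * cmod g \<le> cmod (z*g - 1) + cmod (g - 1)" .
  moreover have "cmod (z-1) * (1/2) \<le> cmod (z-1) * cmod g"
    using True by (intro mult_left_mono) auto
  ultimately have "cmod (z-1) \<le> 2 * (cmod (z*g - 1) + cmod (g - 1))" by simp
  then have "(cmod (z-1))^2 \<le> (2 * (cmod (z*g - 1) + cmod (g - 1)))^2"
    by (rule power_mono[OF _ norm_ge_zero])
  also have "\<dots> \<le> 8*(cmod (z*g - 1))^2 + 8*(cmod (g - 1))^2"
  proof -
    define a where "a = cmod (z*g - 1)"
    define b where "b = cmod (g - 1)"
    have "0 \<le> (a - b)^2" by simp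
    then have ab: "2*(a*b) \<le> a^2 + b^2" by (simp add: power2_diff)
    have "(2 * (a + b))^2 = 4*a^2 + 4*b^2 + 8*(a*b)" by (simp add: power2_eq_square algebra_simps)
    with ab have "(2 * (a + b))^2 \<le> 8*a^2 + 8*b^2" by linarith
    then show ?thesis by (simp add: a_def b_def)
  qed
  finally show ?thesis by linarith
next
  case False
  have "1 \<le> cmod (1 - g) + cmod g"
    using norm_triangle_ineq[of "1 - g" g] by simp
  then have "1/2 \<le> cmod (g - 1)" using False by (simp add: norm_minus_commute)
  then have "(1/2)^2 \<le> (cmod (g - 1))^2" by (rule power_mono) simp
  then have "1/4 \<le> (cmod (g - 1))^2" by (simp add: power_divide)
  moreover have "min 1 ((cmod (z - 1))^2) \<le> 1" by simp
  moreover have "0 \<le> (cmod (z*g - 1))^2" by simp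
  ultimately show ?thesis by linarith
qed

context
  fixes M :: "'a measure" and \<phi> :: "'a \<Rightarrow> complex" and C :: real
  assumes fm: "finite_measure M"
    and phim[measurable]: "\<phi> \<in> borel_measurable M"
    and bnd: "AE x in M. cmod (\<phi> x) \<le> C"
begin

lemma eta_int: "integrable M (\<lambda>x. min 1 ((cmod (\<phi> x ^ k - 1))^2))"
  by (rule Bochner_Integration.integrable_bound[where f="\<lambda>x. 1::real"])
     (auto intro: finite_measure.integrable_const[OF fm])

lemma eta_nonneg: "0 \<le> eta M \<phi> k"
  unfolding eta_def by simp

lemma pow_bound: "AE x in M. cmod (\<phi> x ^ k) \<le> C ^ k"
  using bnd by eventually_elim (simp only: norm_power, rule power_mono[OF _ norm_ge_zero])

lemma Tk_L2: "f \<in> L2 M \<Longrightarrow> (\<lambda>x. \<phi> x ^ k * f x) \<in> L2 M"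
  by (rule L2_mult_bounded[OF _ _ pow_bound]) auto

lemma L2norm_lt: "L2norm M f < r \<Longrightarrow> (LINT x|M. (cmod (f x))^2) < r^2"
proof -
  assume a: "L2norm M f < r"
  have "(L2norm M f)^2 < r^2" by (rule power_strict_mono[OF a L2norm_nonneg]) simp
  then show ?thesis by (simp add: L2norm_sq)
qed

lemma rec_small:
  assumes rec: "recurrent_L2 M (Mmul \<phi>)" and e: "0 < \<epsilon>"
  shows "\<exists>k>0. eta M \<phi> k < \<epsilon>"
proof -
  define r where "r = sqrt (\<epsilon>/32)"
  have r0: "0 < r" using e by (simp add: r_def)
  have r2: "r^2 = \<epsilon>/32" using e by (simp add: r_def)
  have one: "(\<lambda>x. 1::complex) \<in> L2 M" by (rule L2_const[OF fm])
  define U where "U = {g \<in> L2 M. L2norm M (\<lambda>x. g x - 1) < r}"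
  have "L2open M U" unfolding U_def using L2_ball_open[OF one, of r] by simp
  moreover have "(\<lambda>x. 1) \<in> U" using one r0 by (simp add: U_def L2norm_def)
  ultimately obtain k g where k: "0 < k" and g: "g \<in> U" and kg: "(Mmul \<phi> ^^ k) g \<in> U"
    using rec unfolding recurrent_L2_def by blast
  have gL: "g \<in> L2 M" using g by (simp add: U_def)
  have [measurable]: "g \<in> borel_measurable M" using gL by (rule L2_meas)
  have a: "(LINT x|M. (cmod (\<phi> x ^ k * g x - 1))^2) < r^2"
    using kg by (intro L2norm_lt) (simp add: U_def funpow_Mmul)
  have b: "(LINT x|M. (cmod (g x - 1))^2) < r^2"
    using g by (intro L2norm_lt) (simp add: U_def)
  have ia: "integrable M (\<lambda>x. (cmod (\<phi> x ^ k * g x - 1))^2)"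
    using L2_int[OF L2_diff(1)[OF Tk_L2[OF gL] one]] .
  have ib: "integrable M (\<lambda>x. (cmod (g x - 1))^2)"
    using L2_int[OF L2_diff(1)[OF gL one]] .
  have "eta M \<phi> k \<le> (LINT x|M. 8*(cmod (\<phi> x ^ k * g x - 1))^2 + 8*(cmod (g x - 1))^2)"
    unfolding eta_def
    by (rule integral_mono[OF eta_int]) (use ia ib in \<open>auto intro: pw_key\<close>)
  also have "\<dots> = 8 * (LINT x|M. (cmod (\<phi> x ^ k * g x - 1))^2) + 8 * (LINT x|M. (cmod (g x - 1))^2)"
    using ia ib by simp
  also have "\<dots> < 16 * r^2" using a b by simp
  also have "\<dots> < \<epsilon>" using r2 e by simp
  finally show ?thesis using k by blast
qed

lemma eta_zero_mult:
  assumes "eta M \<phi> k = 0"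
  shows "eta M \<phi> (m * k) = 0"
proof -
  have "AE x in M. min 1 ((cmod (\<phi> x ^ k - 1))^2) = 0"
    using assms eta_int[of k] unfolding eta_def
    by (subst (asm) integral_nonneg_eq_0_iff_AE) auto
  moreover have tmin: "\<And>t::real. min 1 t = 0 \<Longrightarrow> t = 0" by (simp add: min_def split: if_splits)
  ultimately have "AE x in M. \<phi> x ^ k = 1"
    by (auto elim!: eventually_mono dest!: tmin)
  then have "AE x in M. min 1 ((cmod (\<phi> x ^ (m*k) - 1))^2) = 0"
    by eventually_elim (simp add: power_mult mult.commute[of m k])
  then show ?thesis unfolding eta_def by (rule integral_eq_zero_AE)
qed

lemma rec_unbounded:
  assumes rec: "recurrent_L2 M (Mmul \<phi>)" and e: "0 < \<epsilon>"
  shows "\<exists>k>N. eta M \<phi> k < \<epsilon>"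
proof (rule ccontr)
  assume "\<not> ?thesis"
  then have big: "\<And>k. k > N \<Longrightarrow> \<epsilon> \<le> eta M \<phi> k" by force
  have small: "\<exists>k\<in>{1..N}. eta M \<phi> k < d" if "0 < d" for d
  proof -
    obtain k where "0 < k" "eta M \<phi> k < min d \<epsilon>"
      using rec_small[OF rec, of "min d \<epsilon>"] e \<open>0 < d\<close> by auto
    have "\<not> k > N"
    proof
      assume "k > N"
      then have "\<epsilon> \<le> eta M \<phi> k" by (rule big)
      with \<open>eta M \<phi> k < min d \<epsilon>\<close> show False by linarith
    qed
    then have "k \<in> {1..N}" using \<open>0 < k\<close> by simp
    with \<open>eta M \<phi> k < min d \<epsilon>\<close> show ?thesis by auto
  qed
  obtain k0 where "k0 \<in> {1..N}" using small[of 1] by auto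
  then have ne: "{1..N} \<noteq> {}" by auto
  define m where "m = Min (eta M \<phi> ` {1..N})"
  have m_in: "m \<in> eta M \<phi> ` {1..N}" unfolding m_def using ne by (intro Min_in) auto
  have m0: "0 \<le> m" using m_in eta_nonneg by auto
  have "m < d" if d0: "0 < d" for d
  proof -
    obtain k where "k \<in> {1..N}" "eta M \<phi> k < d" using small[OF d0] by auto
    moreover have "m \<le> eta M \<phi> k" unfolding m_def using \<open>k \<in> {1..N}\<close> by (intro Min_le) auto
    ultimately show ?thesis by linarith
  qed
  then have "m = 0"
  proof -
    assume h: "\<And>d. 0 < d \<Longrightarrow> m < d"
    show "m = 0"
    proof (rule ccontr)
      assume "m \<noteq> 0"
      then have "0 < m" using m0 by simp
      then have "m < m" by (rule h)
      then show False by simp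
    qed
  qed
  with m_in obtain k where k: "k \<in> {1..N}" "eta M \<phi> k = 0" by auto
  have "eta M \<phi> ((N+1) * k) = 0" by (rule eta_zero_mult[OF k(2)])
  moreover have "(N+1) * k > N" using k(1) by (cases k) auto
  ultimately show False using big[of "(N+1) * k"] e by linarith
qed

end

lemma unit_mod:
  fixes z :: complex
  assumes ks: "strict_mono ks" and lim: "(\<lambda>n. z ^ ks n) \<longlonglongrightarrow> 1"
  shows "cmod z = 1"
proof -
  have la: "(\<lambda>n. cmod z ^ ks n) \<longlonglongrightarrow> 1"
    using tendsto_norm[OF lim] by (simp add: norm_power)
  have zero: "(\<lambda>n. a ^ ks n) \<longlonglongrightarrow> 0" if "0 \<le> a" "a < 1" for a :: real
    using LIMSEQ_subseq_LIMSEQ[OF LIMSEQ_realpow_zero[OF that] ks] by (simp add: o_def)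
  show ?thesis
  proof (cases "cmod z < 1")
    case True
    from LIMSEQ_unique[OF zero[OF _ True] la] show ?thesis by simp
  next
    case False
    show ?thesis
    proof (rule ccontr)
      assume "cmod z \<noteq> 1"
      with False have gt: "1 < cmod z" by simp
      have "(\<lambda>n. inverse (cmod z ^ ks n)) \<longlonglongrightarrow> inverse 1"
        by (rule tendsto_inverse[OF la]) simp
      then have "(\<lambda>n. (inverse (cmod z)) ^ ks n) \<longlonglongrightarrow> 1" by (simp add: power_inverse)
      moreover have "(\<lambda>n. (inverse (cmod z)) ^ ks n) \<longlonglongrightarrow> 0"
        using gt by (intro zero) (auto simp: inverse_less_1_iff)
      ultimately show False using LIMSEQ_unique by fastforce
    qed
  qed
qed

lemma pw_conv:
  fixes w :: "nat \<Rightarrow> complex"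
  assumes "(\<lambda>n. min 1 ((cmod (w n - 1))^2)) \<longlonglongrightarrow> 0"
  shows "w \<longlonglongrightarrow> 1"
proof -
  have ev: "eventually (\<lambda>n. min 1 ((cmod (w n - 1))^2) < 1) sequentially"
    using order_tendstoD(2)[OF assms] by simp
  have "(\<lambda>n. sqrt (min 1 ((cmod (w n - 1))^2))) \<longlonglongrightarrow> sqrt 0"
    by (rule tendsto_real_sqrt[OF assms])
  then have s: "(\<lambda>n. sqrt (min 1 ((cmod (w n - 1))^2))) \<longlonglongrightarrow> 0" by simp
  have "(\<lambda>n. cmod (w n - 1)) \<longlonglongrightarrow> 0"
  proof (rule Lim_transform_eventually[OF s])
    show "eventually (\<lambda>n. sqrt (min 1 ((cmod (w n - 1))^2)) = cmod (w n - 1)) sequentially"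
      using ev by eventually_elim (auto simp: min_def split: if_splits)
  qed
  then have "(\<lambda>n. w n - 1) \<longlonglongrightarrow> 0" by (simp add: tendsto_norm_zero_iff)
  then show ?thesis by (simp add: LIM_zero_iff)
qed

context
  fixes M :: "'a measure" and \<phi> :: "'a \<Rightarrow> complex" and C :: real
  assumes fm: "finite_measure M"
    and phim[measurable]: "\<phi> \<in> borel_measurable M"
    and bnd: "AE x in M. cmod (\<phi> x) \<le> C"
begin

lemma seq_from:
  assumes "\<forall>\<epsilon>>0. \<forall>N. \<exists>k>N. eta M \<phi> k < \<epsilon>"
  shows "\<exists>ks. strict_mono ks \<and> (\<forall>n. 0 < ks n) \<and> (\<lambda>n. eta M \<phi> (ks n)) \<longlonglongrightarrow> 0"
proof -
  have "\<forall>\<epsilon> N. \<exists>k. 0 < \<epsilon> \<longrightarrow> k > N \<and> eta M \<phi> k < \<epsilon>" using assms by blast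
  then obtain F where F: "\<And>\<epsilon> N. 0 < \<epsilon> \<Longrightarrow> F \<epsilon> N > N \<and> eta M \<phi> (F \<epsilon> N) < \<epsilon>" by metis
  define ks where "ks = rec_nat (F 1 0) (\<lambda>n k. F (inverse (real (Suc (Suc n)))) k)"
  have ks0: "ks 0 = F 1 0" by (simp add: ks_def)
  have ksS: "ks (Suc n) = F (inverse (real (Suc (Suc n)))) (ks n)" for n by (simp add: ks_def)
  have b: "eta M \<phi> (ks n) < inverse (real (Suc n))" for n
    by (cases n) (auto simp: ks0 ksS F)
  have inc: "ks n < ks (Suc n)" for n by (simp add: ksS F)
  have sm: "strict_mono ks" by (rule strict_mono_Suc_iff[THEN iffD2]) (simp add: inc)
  have pos: "0 < ks n" for n
  proof (induction n)
    case 0 then show ?case using F[of 1 0] by (simp add: ks0)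
  next
    case (Suc n) then show ?case using inc[of n] by simp
  qed
  have "(\<lambda>n. eta M \<phi> (ks n)) \<longlonglongrightarrow> 0"
  proof (rule tendsto_sandwich[OF _ _ tendsto_const LIMSEQ_inverse_real_of_nat])
    show "eventually (\<lambda>n. 0 \<le> eta M \<phi> (ks n)) sequentially" by (simp add: eta_nonneg[OF fm phim bnd])
    show "eventually (\<lambda>n. eta M \<phi> (ks n) \<le> inverse (real (Suc n))) sequentially"
      using b by (simp add: less_imp_le)
  qed
  with sm pos show ?thesis by blast
qed

lemma AE_from:
  assumes sm: "strict_mono ks" and pos: "\<forall>n. 0 < ks n" and lim: "(\<lambda>n. eta M \<phi> (ks n)) \<longlonglongrightarrow> 0"
  shows "\<exists>ks'. strict_mono ks' \<and> (\<forall>n. 0 < ks' n) \<and> (AE x in M. (\<lambda>n. \<phi> x ^ ks' n) \<longlonglongrightarrow> 1)"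
proof -
  define u where "u n x = min 1 ((cmod (\<phi> x ^ ks n - 1))^2)" for n x
  have ui: "integrable M (u n)" for n unfolding u_def by (rule eta_int[OF fm phim bnd])
  have "(\<lambda>n. (\<integral>x. norm (u n x) \<partial>M)) = (\<lambda>n. eta M \<phi> (ks n))"
    by (simp add: u_def eta_def)
  then have "(\<lambda>n. (\<integral>x. norm (u n x) \<partial>M)) \<longlonglongrightarrow> 0" using lim by simp
  from tendsto_L1_AE_subseq[OF ui this] obtain r where r: "strict_mono r"
    and ae: "AE x in M. (\<lambda>n. u (r n) x) \<longlonglongrightarrow> 0" by blast
  have "AE x in M. (\<lambda>n. \<phi> x ^ (ks \<circ> r) n) \<longlonglongrightarrow> 1"
    using ae by eventually_elim (rule pw_conv, simp add: u_def)
  moreover have "strict_mono (ks \<circ> r)" using sm r by (rule strict_mono_o)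
  moreover have "\<forall>n. 0 < (ks \<circ> r) n" using pos by simp
  ultimately show ?thesis by blast
qed

lemma rec_iii:
  assumes rec: "recurrent_L2 M (Mmul \<phi>)"
  shows "\<exists>ks. strict_mono ks \<and> (\<forall>n. 0 < ks n) \<and> (AE x in M. (\<lambda>n. \<phi> x ^ ks n) \<longlonglongrightarrow> 1)"
proof -
  have "\<forall>\<epsilon>>0. \<forall>N. \<exists>k>N. eta M \<phi> k < \<epsilon>"
    using rec_unbounded[OF fm phim bnd rec] by blast
  from seq_from[OF this] obtain ks where "strict_mono ks" "\<forall>n. 0 < ks n" "(\<lambda>n. eta M \<phi> (ks n)) \<longlonglongrightarrow> 0"
    by blast
  then show ?thesis by (rule AE_from)
qed

lemma iii_unit:
  assumes sm: "strict_mono ks" and ae: "AE x in M. (\<lambda>n. \<phi> x ^ ks n) \<longlonglongrightarrow> 1"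
  shows "AE x in M. cmod (\<phi> x) = 1"
  using ae by eventually_elim (rule unit_mod[OF sm])

lemma iii_rigid:
  assumes sm: "strict_mono ks" and pos: "\<forall>n. 0 < ks n" and ae: "AE x in M. (\<lambda>n. \<phi> x ^ ks n) \<longlonglongrightarrow> 1"
  shows "rigid_L2 M (Mmul \<phi>)"
  unfolding rigid_L2_def
proof (intro exI[of _ ks] conjI ballI)
  show "strict_mono ks" "\<forall>n. 0 < ks n" by fact+
  fix f assume fL: "f \<in> L2 M"
  have [measurable]: "f \<in> borel_measurable M" using fL by (rule L2_meas)
  have u: "AE x in M. cmod (\<phi> x) = 1" by (rule iii_unit[OF sm ae])
  define s where "s = (\<lambda>n x. (cmod (\<phi> x ^ ks n * f x - f x))^2)"
  have "(\<lambda>n. integral\<^sup>L M (s n)) \<longlonglongrightarrow> integral\<^sup>L M (\<lambda>x. 0::real)"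
  proof (rule integral_dominated_convergence[where w="\<lambda>x. 4 * (cmod (f x))^2"])
    show "(\<lambda>x. 0::real) \<in> borel_measurable M" by simp
    show "s i \<in> borel_measurable M" for i unfolding s_def by measurable
    show "integrable M (\<lambda>x. 4 * (cmod (f x))^2)" using L2_int[OF fL] by simp
    show "AE x in M. (\<lambda>i. s i x) \<longlonglongrightarrow> 0"
      using ae
    proof eventually_elim
      case (elim x)
      have "(\<lambda>i. (cmod (\<phi> x ^ ks i * f x - f x))^2) \<longlonglongrightarrow> (cmod (1 * f x - f x))^2"
        by (intro tendsto_intros elim)
      then show ?case by (simp add: s_def)
    qed
    show "AE x in M. norm (s i x) \<le> 4 * (cmod (f x))^2" for i
      using u
    proof eventually_elim
      case (elim x)
      have "cmod (\<phi> x ^ ks i * f x - f x) \<le> cmod (\<phi> x ^ ks i * f x) + cmod (f x)"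
        by (rule norm_triangle_ineq4)
      also have "\<dots> = 2 * cmod (f x)" using elim by (simp add: norm_mult norm_power)
      finally have "(cmod (\<phi> x ^ ks i * f x - f x))^2 \<le> (2 * cmod (f x))^2"
        by (rule power_mono) simp
      then show ?case by (simp add: s_def power_mult_distrib)
    qed
  qed
  then have "(\<lambda>n. sqrt (integral\<^sup>L M (s n))) \<longlonglongrightarrow> sqrt 0"
    by (intro tendsto_real_sqrt) simp
  then show "(\<lambda>n. L2norm M (\<lambda>x. (Mmul \<phi> ^^ ks n) f x - f x)) \<longlonglongrightarrow> 0"
    by (simp add: L2norm_def funpow_Mmul s_def)
qed

lemma rigid_eta:
  assumes "rigid_L2 M (Mmul \<phi>)"
  shows "\<exists>ks. strict_mono ks \<and> (\<forall>n. 0 < ks n) \<and> (\<lambda>n. eta M \<phi> (ks n)) \<longlonglongrightarrow> 0"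
proof -
  have one: "(\<lambda>x. 1::complex) \<in> L2 M" by (rule L2_const[OF fm])
  obtain ks where sm: "strict_mono ks" and pos: "\<forall>n. 0 < ks n"
    and H: "\<forall>f\<in>L2 M. (\<lambda>n. L2norm M (\<lambda>x. (Mmul \<phi> ^^ ks n) f x - f x)) \<longlonglongrightarrow> 0"
    using assms unfolding rigid_L2_def by blast
  have lim: "(\<lambda>n. L2norm M (\<lambda>x. (Mmul \<phi> ^^ ks n) (\<lambda>x. 1) x - 1)) \<longlonglongrightarrow> 0"
    using H one by blast
  have lim2: "(\<lambda>n. (L2norm M (\<lambda>x. \<phi> x ^ ks n - 1))^2) \<longlonglongrightarrow> 0"
    using tendsto_power[OF lim, of 2] by (simp add: funpow_Mmul)
  have "(\<lambda>n. eta M \<phi> (ks n)) \<longlonglongrightarrow> 0"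
  proof (rule tendsto_sandwich[OF _ _ tendsto_const lim2])
    show "eventually (\<lambda>n. 0 \<le> eta M \<phi> (ks n)) sequentially" by (simp add: eta_nonneg[OF fm phim bnd])
    show "eventually (\<lambda>n. eta M \<phi> (ks n) \<le> (L2norm M (\<lambda>x. \<phi> x ^ ks n - 1))^2) sequentially"
    proof (rule always_eventually, rule allI)
      fix n
      have i: "integrable M (\<lambda>x. (cmod (\<phi> x ^ ks n - 1))^2)"
        using L2_int[OF L2_diff(1)[OF Tk_L2[OF fm phim bnd one] one]] by simp
      show "eta M \<phi> (ks n) \<le> (L2norm M (\<lambda>x. \<phi> x ^ ks n - 1))^2"
        unfolding eta_def L2norm_sq
        by (rule integral_mono[OF eta_int[OF fm phim bnd] i]) simp
    qed
  qed
  with sm pos show ?thesis by blast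
qed

lemma rigid_rec:
  assumes rig: "rigid_L2 M (Mmul \<phi>)"
  shows "recurrent_L2 M (Mmul \<phi>)"
  unfolding recurrent_L2_def
proof (intro allI impI)
  fix U assume "L2open M U \<and> U \<noteq> {}"
  then have op: "L2open M U" and ne: "U \<noteq> {}" by auto
  obtain f where fU: "f \<in> U" using ne by auto
  have sub: "U \<subseteq> L2 M" using op by (simp add: L2open_def)
  have fL: "f \<in> L2 M" using sub fU by blast
  have ball: "\<forall>f\<in>U. \<exists>e>0. \<forall>g\<in>L2 M. L2norm M (\<lambda>x. g x - f x) < e \<longrightarrow> g \<in> U"
    using op by (simp add: L2open_def)
  obtain e where e: "0 < e" and eU0: "\<forall>g\<in>L2 M. L2norm M (\<lambda>x. g x - f x) < e \<longrightarrow> g \<in> U"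
    using bspec[OF ball fU] by blast
  have eU: "\<And>g. g \<in> L2 M \<Longrightarrow> L2norm M (\<lambda>x. g x - f x) < e \<Longrightarrow> g \<in> U"
    using eU0 by blast
  obtain ks where pos: "\<forall>n. 0 < ks n"
    and H: "\<forall>f\<in>L2 M. (\<lambda>n. L2norm M (\<lambda>x. (Mmul \<phi> ^^ ks n) f x - f x)) \<longlonglongrightarrow> 0"
    using rig unfolding rigid_L2_def by blast
  have lim: "(\<lambda>n. L2norm M (\<lambda>x. (Mmul \<phi> ^^ ks n) f x - f x)) \<longlonglongrightarrow> 0"
    using H fL by blast
  have "eventually (\<lambda>n. L2norm M (\<lambda>x. (Mmul \<phi> ^^ ks n) f x - f x) < e) sequentially"
    using order_tendstoD(2)[OF lim e] .
  then obtain N where "\<forall>n\<ge>N. L2norm M (\<lambda>x. (Mmul \<phi> ^^ ks n) f x - f x) < e"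
    unfolding eventually_sequentially by blast
  then have n: "L2norm M (\<lambda>x. (Mmul \<phi> ^^ ks N) f x - f x) < e" by blast
  have "(Mmul \<phi> ^^ ks N) f \<in> L2 M"
    unfolding funpow_Mmul by (rule Tk_L2[OF fm phim bnd fL])
  then have "(Mmul \<phi> ^^ ks N) f \<in> U" using n by (intro eU)
  then show "\<exists>k>0. \<exists>g\<in>U. (Mmul \<phi> ^^ k) g \<in> U" using pos fU by (intro exI[of _ "ks N"]) blast
qed

end

context
  fixes M :: "'a measure" and \<psi> :: "'a \<Rightarrow> complex" and D :: real
  assumes fm: "finite_measure M"
    and psim[measurable]: "\<psi> \<in> borel_measurable M"
    and bndD: "AE x in M. cmod (\<psi> x) \<le> D"
begin

lemma Linf_S_ne: "{C. 0 \<le> C \<and> (AE x in M. cmod (\<psi> x) \<le> C)} \<noteq> {}"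
proof -
  have "AE x in M. cmod (\<psi> x) \<le> max D 0" using bndD by eventually_elim simp
  then have "max D 0 \<in> {C. 0 \<le> C \<and> (AE x in M. cmod (\<psi> x) \<le> C)}" by simp
  then show ?thesis by blast
qed

lemma Linf_bdd: "bdd_below {C. 0 \<le> C \<and> (AE x in M. cmod (\<psi> x) \<le> C)}"
  by (rule bdd_belowI[of _ 0]) simp

lemma Linf_nonneg: "0 \<le> Linf_norm M \<psi>"
  unfolding Linf_norm_def by (rule cInf_greatest[OF Linf_S_ne]) simp

lemma Linf_AE: "AE x in M. cmod (\<psi> x) \<le> Linf_norm M \<psi>"
proof -
  define S where "S = {C. 0 \<le> C \<and> (AE x in M. cmod (\<psi> x) \<le> C)}"
  have LS: "Linf_norm M \<psi> = Inf S" unfolding S_def Linf_norm_def ..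
  have each: "AE x in M. cmod (\<psi> x) \<le> Linf_norm M \<psi> + inverse (real (Suc n))" for n
  proof -
    have "Inf S < Linf_norm M \<psi> + inverse (real (Suc n))" unfolding LS by simp
    then have "\<exists>C\<in>S. C < Linf_norm M \<psi> + inverse (real (Suc n))"
      using cInf_less_iff[OF Linf_S_ne Linf_bdd] unfolding S_def by blast
    then obtain C where C: "AE x in M. cmod (\<psi> x) \<le> C"
      and Cl: "C < Linf_norm M \<psi> + inverse (real (Suc n))" unfolding S_def by blast
    from C show ?thesis
    proof eventually_elim
      case (elim x) with Cl show ?case by linarith
    qed
  qed
  have "AE x in M. \<forall>n. cmod (\<psi> x) \<le> Linf_norm M \<psi> + inverse (real (Suc n))"
    by (rule AE_all_countable[THEN iffD2]) (rule allI, rule each)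
  then show ?thesis
  proof eventually_elim
    case (elim x)
    show ?case
    proof (rule ccontr)
      assume "\<not> ?case"
      then have "0 < cmod (\<psi> x) - Linf_norm M \<psi>" by simp
      from ex_inverse_of_nat_less[OF this] obtain n :: nat where n0: "n > 0"
        and n: "inverse (real n) < cmod (\<psi> x) - Linf_norm M \<psi>" by blast
      have "inverse (real (Suc n)) \<le> inverse (real n)"
        by (rule le_imp_inverse_le) (use n0 in auto)
      moreover have "cmod (\<psi> x) \<le> Linf_norm M \<psi> + inverse (real (Suc n))"
        using elim by blast
      ultimately show False using n by linarith
    qed
  qed
qed

lemma Linf_not_AE:
  assumes "0 \<le> c" "c < Linf_norm M \<psi>"
  shows "\<not> (AE x in M. cmod (\<psi> x) \<le> c)"
proof
  assume "AE x in M. cmod (\<psi> x) \<le> c"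
  then have "Linf_norm M \<psi> \<le> c" unfolding Linf_norm_def
    using assms(1) by (intro cInf_lower[OF _ Linf_bdd]) simp
  with assms show False by simp
qed

lemma opnorm_upper:
  assumes fL: "f \<in> L2 M" and f1: "L2norm M f \<le> 1"
  shows "L2norm M (\<lambda>x. \<psi> x * f x) \<le> Linf_norm M \<psi>"
proof -
  define L where "L = Linf_norm M \<psi>"
  have L0: "0 \<le> L" unfolding L_def by (rule Linf_nonneg)
  have [measurable]: "f \<in> borel_measurable M" using fL by (rule L2_meas)
  have i1: "integrable M (\<lambda>x. (cmod (\<psi> x * f x))^2)"
    by (rule L2_int[OF L2_mult_bounded[OF fL psim bndD]])
  have "(LINT x|M. (cmod (\<psi> x * f x))^2) \<le> (LINT x|M. L^2 * (cmod (f x))^2)"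
  proof (rule integral_mono_AE[OF i1])
    show "integrable M (\<lambda>x. L^2 * (cmod (f x))^2)" using L2_int[OF fL] by simp
    show "AE x in M. (cmod (\<psi> x * f x))^2 \<le> L^2 * (cmod (f x))^2"
      using Linf_AE unfolding L_def[symmetric]
    proof eventually_elim
      case (elim x)
      have "(cmod (\<psi> x))^2 \<le> L^2" by (rule power_mono[OF elim norm_ge_zero])
      then have "(cmod (\<psi> x))^2 * (cmod (f x))^2 \<le> L^2 * (cmod (f x))^2"
        by (simp add: mult_right_mono)
      then show ?case by (simp add: norm_mult power_mult_distrib)
    qed
  qed
  also have "\<dots> = L^2 * (L2norm M f)^2" by (simp add: L2norm_sq)
  also have "\<dots> \<le> L^2 * 1"
  proof -
    have "(L2norm M f)^2 \<le> 1^2" using f1 L2norm_nonneg[of M f] by (intro power_mono) auto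
    then show ?thesis by (intro mult_left_mono) simp_all
  qed
  finally have "(L2norm M (\<lambda>x. \<psi> x * f x))^2 \<le> L^2" by (simp add: L2norm_sq)
  then show ?thesis unfolding L_def[symmetric]
    by (rule power2_le_imp_le[OF _ L0])
qed

lemma opnorm_eq: "L2opnorm M (\<lambda>f x. \<psi> x * f x) = Linf_norm M \<psi>"
proof -
  define T where "T = {L2norm M (\<lambda>x. \<psi> x * f x) | f. f \<in> L2 M \<and> L2norm M f \<le> 1}"
  have opT: "L2opnorm M (\<lambda>f x. \<psi> x * f x) = Sup T" unfolding L2opnorm_def T_def by simp
  have zero: "(\<lambda>x. 0::complex) \<in> L2 M" by (rule L2_const[OF fm])
  have "L2norm M (\<lambda>x. \<psi> x * 0) \<in> T" unfolding T_def using zero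
    by (auto simp: L2norm_def intro!: exI[of _ "\<lambda>x. 0"])
  then have T0: "0 \<in> T" by (simp add: L2norm_def)
  then have Tne: "T \<noteq> {}" by blast
  have Tub: "\<And>t. t \<in> T \<Longrightarrow> t \<le> Linf_norm M \<psi>" unfolding T_def using opnorm_upper by blast
  then have Tbdd: "bdd_above T" by (rule bdd_aboveI)
  have le: "Sup T \<le> Linf_norm M \<psi>" by (rule cSup_least[OF Tne Tub])
  have lower: "c \<le> Sup T" if c0: "0 < c" and cL: "c < Linf_norm M \<psi>" for c
  proof -
    define A where "A = {x\<in>space M. c < cmod (\<psi> x)}"
    have A[measurable]: "A \<in> sets M" unfolding A_def by measurable
    have "emeasure M A \<noteq> 0"
    proof
      assume "emeasure M A = 0"
      then have "AE x in M. cmod (\<psi> x) \<le> c"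
        by (subst AE_iff_measurable[OF A]) (auto simp: A_def not_le)
      with Linf_not_AE[of c] c0 cL show False by simp
    qed
    then have a0: "0 < measure M A"
      using finite_measure.emeasure_eq_measure[OF fm] by (simp add: zero_less_measure_iff)
    define a where "a = measure M A"
    have Afin: "emeasure M A < \<infinity>" using finite_measure.emeasure_finite[OF fm] by (simp add: less_top)
    define f where "f x = complex_of_real (indicator A x / sqrt a)" for x
    have f2: "(cmod (f x))^2 = indicator A x / a" for x
    proof -
      have "(cmod (f x))^2 = (indicator A x / sqrt a)^2" unfolding f_def norm_of_real by (simp add: power_divide)
      also have "\<dots> = indicator A x / a" using a0 unfolding a_def by (auto simp: power_divide indicator_def)
      finally show ?thesis .
    qed
    have [measurable]: "f \<in> borel_measurable M" unfolding f_def by measurable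
    have if2: "integrable M (\<lambda>x. (cmod (f x))^2)" unfolding f2 using A Afin by simp
    have fL: "f \<in> L2 M" by (rule L2_I) (auto simp: if2)
    have "(L2norm M f)^2 = 1" unfolding L2norm_sq f2 using a0
      by (simp add: a_def Int_absorb2 sets.sets_into_space[OF A])
    then have f1: "L2norm M f \<le> 1" using L2norm_nonneg[of M f]
      by (metis abs_of_nonneg order_refl real_sqrt_abs real_sqrt_one)
    have "c^2 = (LINT x|M. c^2 * (indicator A x / a))"
      using a0 by (simp add: a_def Int_absorb2 sets.sets_into_space[OF A])
    also have "\<dots> \<le> (LINT x|M. (cmod (\<psi> x * f x))^2)"
    proof (rule integral_mono)
      show "integrable M (\<lambda>x. c^2 * (indicator A x / a))" using A Afin by simp
      show "integrable M (\<lambda>x. (cmod (\<psi> x * f x))^2)"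
        by (rule L2_int[OF L2_mult_bounded[OF fL psim bndD]])
      fix x assume x: "x \<in> space M"
      show "c^2 * (indicator A x / a) \<le> (cmod (\<psi> x * f x))^2"
      proof (cases "x \<in> A")
        case True
        then have "c < cmod (\<psi> x)" by (simp add: A_def)
        then have "c^2 \<le> (cmod (\<psi> x))^2" using c0 by (intro power_mono) auto
        then have "c^2 * (1/a) \<le> (cmod (\<psi> x))^2 * (1/a)" using a0 by (intro mult_right_mono) (auto simp: a_def)
        then show ?thesis using True f2[of x] by (simp add: norm_mult power_mult_distrib)
      next
        case False
        then show ?thesis by simp
      qed
    qed
    also have "\<dots> = (L2norm M (\<lambda>x. \<psi> x * f x))^2" by (simp add: L2norm_sq)
    finally have "c \<le> L2norm M (\<lambda>x. \<psi> x * f x)"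
      by (rule power2_le_imp_le[OF _ L2norm_nonneg])
    also have "\<dots> \<le> Sup T" by (rule cSup_upper[OF _ Tbdd]) (use fL f1 in \<open>auto simp: T_def\<close>)
    finally show ?thesis .
  qed
  have ge: "Linf_norm M \<psi> \<le> Sup T"
  proof (cases "Linf_norm M \<psi> = 0")
    case True
    then show ?thesis using cSup_upper[OF T0 Tbdd] by simp
  next
    case False
    then have "0 < Linf_norm M \<psi>" using Linf_nonneg by simp
    then show ?thesis by (rule dense_le_bounded) (rule lower)
  qed
  show ?thesis using le ge opT by simp
qed

end

lemma op_rewrite: "(\<lambda>f x. (Mmul \<phi> ^^ k) f x - f x) = (\<lambda>f x. (\<phi> x ^ k - 1) * f x)"
  by (simp add: funpow_Mmul algebra_simps)

theorem theorem7p6: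
  fixes M :: "'a::topological_space measure" and \<phi> :: "'a \<Rightarrow> complex"
  assumes "finite_measure M" and "sets M = sets borel" and "\<phi> \<in> Linf M"
  shows "(recurrent_L2 M (Mmul \<phi>) \<longleftrightarrow> rigid_L2 M (Mmul \<phi>))
       \<and> (rigid_L2 M (Mmul \<phi>) \<longleftrightarrow>
           (\<exists>ks::nat \<Rightarrow> nat. strict_mono ks \<and> (\<forall>n. 0 < ks n) \<and>
              (AE x in M. (\<lambda>n. \<phi> x ^ ks n) \<longlonglongrightarrow> 1)))
       \<and> (unif_rigid_L2 M (Mmul \<phi>) \<longleftrightarrow>
           (\<exists>ks::nat \<Rightarrow> nat. strict_mono ks \<and> (\<forall>n. 0 < ks n) \<and>
              (\<lambda>n. Linf_norm M (\<lambda>x. \<phi> x ^ ks n - 1)) \<longlonglongrightarrow> 0))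
       \<and> (recurrent_L2 M (Mmul \<phi>) \<longrightarrow> (AE x in M. cmod (\<phi> x) = 1))"
proof -
  note fm = assms(1)
  have phim[measurable]: "\<phi> \<in> borel_measurable M" using assms(3) by (simp add: Linf_def)
  obtain C where bnd: "AE x in M. cmod (\<phi> x) \<le> C" using assms(3) by (auto simp: Linf_def)
  have R_III: "recurrent_L2 M (Mmul \<phi>) \<Longrightarrow> \<exists>ks::nat \<Rightarrow> nat. strict_mono ks \<and> (\<forall>n. 0 < ks n) \<and>
              (AE x in M. (\<lambda>n. \<phi> x ^ ks n) \<longlonglongrightarrow> 1)"
    by (rule rec_iii[OF fm phim bnd])
  have III_G: "(\<exists>ks::nat \<Rightarrow> nat. strict_mono ks \<and> (\<forall>n. 0 < ks n) \<and>
              (AE x in M. (\<lambda>n. \<phi> x ^ ks n) \<longlonglongrightarrow> 1)) \<Longrightarrow> rigid_L2 M (Mmul \<phi>)"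
    using iii_rigid[OF fm phim bnd] by blast
  have G_R: "rigid_L2 M (Mmul \<phi>) \<Longrightarrow> recurrent_L2 M (Mmul \<phi>)"
    by (rule rigid_rec[OF fm phim bnd])
  have R_U: "recurrent_L2 M (Mmul \<phi>) \<Longrightarrow> AE x in M. cmod (\<phi> x) = 1"
    using R_III iii_unit[OF fm phim bnd] by blast
  have opk: "L2opnorm M (\<lambda>f x. (Mmul \<phi> ^^ k) f x - f x) = Linf_norm M (\<lambda>x. \<phi> x ^ k - 1)" for k
  proof -
    have b: "AE x in M. cmod (\<phi> x ^ k - 1) \<le> C ^ k + 1"
      using pow_bound[OF fm phim bnd, of k]
    proof eventually_elim
      case (elim x)
      have "cmod (\<phi> x ^ k - 1) \<le> cmod (\<phi> x ^ k) + cmod (1::complex)" by (rule norm_triangle_ineq4)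
      with elim show ?case by simp
    qed
    show ?thesis unfolding op_rewrite
      by (rule opnorm_eq[OF fm _ b]) measurable
  qed
  show ?thesis
    unfolding unif_rigid_L2_def opk
    using R_III III_G G_R R_U by blast
qed

end
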